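(* Under the setting and Assumptions A1–A4 described in the context, let $\{\mathcal{X}^t\}$ be generated by the TNNR iteration, set $\delta_t=\mu^t\theta_1^t/2$ and $H_{\delta_{t+1}}(\mathcal{X}^{t+1},\mathcal{X}^t)=F(\mathcal{X}^{t+1})+\delta_{t+1}\|\mathcal{X}^{t+1}-\mathcal{X}^t\|^2$. Then (i) for all $t\ge 0$, $H_{\delta_{t+1}}(\mathcal{X}^{t+1},\mathcal{X}^t)-H_{\delta_t}(\mathcal{X}^t,\mathcal{X}^{t-1})\le-\frac{\varepsilon L_f}{2}\|\mathcal{X}^{t+1}-\mathcal{X}^t\|^2$; in particular the sequence $H_{\delta_{t+1}}(\mathcal{X}^{t+1},\mathcal{X}^t)$ is monotonically nonincreasing; (ii) $\lim_{t\to\infty}(\mathcal{X}^t-\mathcal{X}^{t+1})=0$.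
   Context: Tensors: fix positive integers $n_1,n_2,n_3$, let $r=\min\{n_1,n_2\}$. For $\mathcal{X}\in\mathbb{R}^{n_1\times n_2\times n_3}$, $\|\mathcal{X}\|$ is the Frobenius norm (square root of the sum of squared entries) and $\langle\cdot,\cdot\rangle$ the entrywise inner product. $\bar{\mathcal{X}}\in\mathbb{C}^{n_1\times n_2\times n_3}$ is the (unnormalized) discrete Fourier transform of $\mathcal{X}$ along the third mode, $\bar{\mathcal{X}}(i,j,:)=F_{n_3}\mathcal{X}(i,j,:)$ with $F_{n_3}$ the $n_3\times n_3$ DFT matrix $(\omega^{(p-1)(q-1)})_{p,q}$, $\omega=e^{-2\pi\sqrt{-1}/n_3}$; $\bar X^{(k)}$ is its $k$-th frontal slice, and $\sigma_i^k(\mathcal{X})$ denotes the $i$-th largest singular value of $\bar X^{(k)}$, $i\in[r]$, $k\in[n_3]$. Assumption A1: $\rho:[0,\infty)\to[0,\infty)$ is differentiable and concave, $\rho'$ is Lipschitz continuous with constant $L_g$, and $\rho'(t)>0$ for all $t\ge 0$. Assumption A2: $f:\mathbb{R}^{n_1\times n_2\times n_3}\to[0,\infty)$ is continuously differentiable and $\nabla f$ is $L_f$-Lipschitz ($L_f>0$). Objective: for $\lambda>0$, $F(\mathcal{X})=\lambda\sum_{k=1}^{n_3}\rho\Big(\sum_{i=1}^r\rho\big(\rho(\sigma_i^k(\mathcal{X}))\big)\Big)+f(\mathcal{X})$. Assumption A3: $F$ is coercive ($F(\mathcal{X})\to+\infty$ as $\|\mathcal{X}\|\to\infty$) and bounded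 below. Weighted function: for weights $\alpha=(\alpha_k)_{k\in[n_3]}$, $\beta=(\beta_i^k)$, $\|\mathcal{X}\|_{\rho_\alpha^\beta}=\sum_{k=1}^{n_3}\sum_{i=1}^r\alpha_k\beta_i^k\rho(\sigma_i^k(\mathcal{X}))$. TNNR iteration: start from $\mathcal{X}^0$ and set $\mathcal{X}^{-1}=\mathcal{X}^0$; for every $t\ge 0$ the weights are $\alpha_k^t=\rho'\big(\sum_{i=1}^r\rho(\rho(\sigma_i^k(\mathcal{X}^t)))\big)$, $\beta_i^{k,t}=\rho'\big(\rho(\sigma_i^k(\mathcal{X}^t))\big)$, and $\mathcal{Y}^t=\mathcal{X}^t+\theta_1^t(\mathcal{X}^t-\mathcal{X}^{t-1})$, $\mathcal{Z}^t=\mathcal{X}^t+\theta_2^t(\mathcal{X}^t-\mathcal{X}^{t-1})$, $\mathcal{X}^{t+1}\in\arg\min_{\mathcal{X}}\ \lambda\|\mathcal{X}\|_{\rho_{\alpha^t}^{\beta^t}}+\langle\mathcal{X}-\mathcal{Y}^t,\nabla f(\mathcal{Z}^t)\rangle+\frac{\mu^t}{2}\|\mathcal{X}-\mathcal{Y}^t\|^2$ (a global minimizer). Assumption A4: for some fixed $\varepsilon\in(0,1)$ and all $t$: $\theta_1^t\in[0,(1-\varepsilon)/2)$, $\theta_2^t\in[0,1/2]$, $(\mu^t)$ is nonincreasing and $\mu^0\ge\mu^t\ge\max\{\theta_2^tL_f/\theta_1^t,\ (1-\theta_2^t)L_f/(1-\theta_1^t-\theta_1^{t+1}-\varepsilon)\}$.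 *)

theory Defs
  imports "HOL-Analysis.Analysis"
begin

text \<open>Tensors in R^(n1 x n2 x n3) are elements of real^'c^'b^'a (n1 = CARD('a), n2 = CARD('b),
 n3 = CARD('c)); entry (i,j,k) is X$i$j$k.  The Euclidean norm / inner product of this type are
 exactly the Frobenius norm / entrywise inner product.  The linear order on each (finite) index
 type fixes the numbering 1..n of that mode (tidx gives the 0-based position).\<close>

type_synonym ('a, 'b, 'c) tensor = "(((real, 'c) vec, 'b) vec, 'a) vec"
type_synonym ('a, 'b) cmat = "((complex, 'b) vec, 'a) vec"

definition tidx :: "'c::{finite,linorder} \<Rightarrow> nat" where
  "tidx c = card {d. d < c}"

definition cadj :: "('a::finite, 'b::finite) cmat \<Rightarrow> ('b, 'a) cmat" where
  "cadj A = (\<chi> j i. cnj (A$i$j))"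

definition unitary :: "('a::finite, 'a) cmat \<Rightarrow> bool" where
  "unitary U \<longleftrightarrow> U ** cadj U = mat 1 \<and> cadj U ** U = mat 1"

text \<open>Singular values of an n1 x n2 complex matrix (0-based index, sorted nonincreasingly,
 set to zero beyond min(n1,n2)), defined through the singular value decomposition
 A = U diag(s) V^H with U, V unitary.\<close>
definition is_svals :: "('a::{finite,linorder}, 'b::{finite,linorder}) cmat \<Rightarrow> (nat \<Rightarrow> real) \<Rightarrow> bool" where
  "is_svals A s \<longleftrightarrow>
     (\<forall>i. min (card (UNIV::'a set)) (card (UNIV::'b set)) \<le> i \<longrightarrow> s i = 0) \<and>
     (\<forall>i. 0 \<le> s i) \<and> (\<forall>i j. i \<le> j \<longrightarrow> s j \<le> s i) \<and>
     (\<exists>(U::('a,'a) cmat) (V::('b,'b) cmat). unitary U \<and> unitary V \<and>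
        A = U ** (\<chi> i j. if tidx i = tidx j then complex_of_real (s (tidx i)) else 0) ** cadj V)"

definition svals :: "('a::{finite,linorder}, 'b::{finite,linorder}) cmat \<Rightarrow> nat \<Rightarrow> real" where
  "svals A = (THE s. is_svals A s)"

text \<open>Unnormalized DFT along the third mode; k-th frontal slice of the transformed tensor,
 with DFT matrix entries omega^((p-1)(q-1)), omega = exp(-2 pi i / n3).\<close>
definition dft_omega :: "nat \<Rightarrow> complex" where
  "dft_omega n = exp (- 2 * of_real pi * \<i> / of_nat n)"

definition dft_slice :: "('a::finite, 'b::finite, 'c::{finite,linorder}) tensor \<Rightarrow> 'c \<Rightarrow> ('a, 'b) cmat" where
  "dft_slice X k = (\<chi> i j. \<Sum>q\<in>UNIV. dft_omega (card (UNIV::'c set)) ^ (tidx k * tidx q) * complex_of_real (X$i$j$q))"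

text \<open>tsigma X k i = (i+1)-th largest singular value of the k-th frontal slice of bar X.\<close>
definition tsigma :: "('a::{finite,linorder}, 'b::{finite,linorder}, 'c::{finite,linorder}) tensor \<Rightarrow> 'c \<Rightarrow> nat \<Rightarrow> real" where
  "tsigma X k i = svals (dft_slice X k) i"

definition objF :: "(real \<Rightarrow> real) \<Rightarrow> real \<Rightarrow> (('a, 'b, 'c) tensor \<Rightarrow> real) \<Rightarrow>
    ('a::{finite,linorder}, 'b::{finite,linorder}, 'c::{finite,linorder}) tensor \<Rightarrow> real" where
  "objF \<rho> lam f X = lam * (\<Sum>k\<in>UNIV. \<rho> (\<Sum>i<min (card (UNIV::'a set)) (card (UNIV::'b set)). \<rho> (\<rho> (tsigma X k i)))) + f X"

definition wfun :: "(real \<Rightarrow> real) \<Rightarrow> ('c \<Rightarrow> real) \<Rightarrow> ('c \<Rightarrow> nat \<Rightarrow> real) \<Rightarrow>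
    ('a::{finite,linorder}, 'b::{finite,linorder}, 'c::{finite,linorder}) tensor \<Rightarrow> real" where
  "wfun \<rho> \<alpha> \<beta> X = (\<Sum>k\<in>UNIV. \<Sum>i<min (card (UNIV::'a set)) (card (UNIV::'b set)). \<alpha> k * \<beta> k i * \<rho> (tsigma X k i))"

end

theory Submission
  imports Defs "HOL-Computational_Algebra.Polynomial"
begin


definition cinner :: "complex^'n \<Rightarrow> complex^'n \<Rightarrow> complex" where
  "cinner x y = (\<Sum>i\<in>UNIV. cnj (x$i) * y$i)"

lemma cinner_add_right: "cinner x (y + z) = cinner x y + cinner x z"
  by (simp add: cinner_def distrib_left sum.distrib)
lemma cinner_diff_right: "cinner x (y - z) = cinner x y - cinner x z"
  by (simp add: cinner_def right_diff_distrib sum_subtractf)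
lemma cinner_scale_right: "cinner x (c *s y) = c * cinner x y"
  by (simp add: cinner_def sum_distrib_left algebra_simps)
lemma cinner_scale_left: "cinner (c *s x) y = cnj c * cinner x y"
  by (simp add: cinner_def sum_distrib_left algebra_simps)
lemma cinner_zero_right[simp]: "cinner x 0 = 0"
  by (simp add: cinner_def)
lemma cinner_sum_right: "cinner x (\<Sum>i\<in>S. f i) = (\<Sum>i\<in>S. cinner x (f i))"
  by (induction S rule: infinite_finite_induct) (simp_all add: cinner_add_right)
lemma cinner_commute: "cinner y x = cnj (cinner x y)"
  by (simp add: cinner_def mult.commute)
lemma scaleR_vs: "c *\<^sub>R x = complex_of_real c *s x" for x :: "complex^'n"
  unfolding scaleR_vec_def vector_scalar_mult_def by (simp add: scaleR_conv_of_real)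
lemma Re_cinner: "Re (cinner x y) = x \<bullet> y"
  by (simp add: cinner_def inner_vec_def inner_complex_def Re_sum)
lemma cinner_self: "cinner x x = complex_of_real ((norm x)^2)"
proof -
  have "Im (cinner x x) = 0" by (simp add: cinner_def Im_sum algebra_simps)
  moreover have "Re (cinner x x) = (norm x)^2" by (simp add: Re_cinner power2_norm_eq_inner)
  ultimately show ?thesis by (simp add: complex_eq_iff)
qed
lemma cadj_mult_vec: "cinner x (A *v y) = cinner (cadj A *v x) y"
proof -
  have "cinner x (A *v y) = (\<Sum>i\<in>UNIV. \<Sum>j\<in>UNIV. cnj (x$i) * A$i$j * y$j)"
    by (simp add: cinner_def matrix_vector_mult_def sum_distrib_left mult.assoc)
  also have "\<dots> = (\<Sum>j\<in>UNIV. \<Sum>i\<in>UNIV. cnj (x$i) * A$i$j * y$j)" by (rule sum.swap)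
  also have "\<dots> = cinner (cadj A *v x) y"
    unfolding cinner_def matrix_vector_mult_def cadj_def by (simp add: sum_distrib_right sum_distrib_left ac_simps)
  finally show ?thesis .
qed
lemma cadj_cadj: "cadj (cadj A) = A" by (simp add: cadj_def vec_eq_iff)
lemma cadj_mult: "cadj (X ** Y) = cadj Y ** cadj X"
  by (simp add: cadj_def vec_eq_iff matrix_matrix_mult_def mult.commute)

definition orthon :: "nat \<Rightarrow> (nat \<Rightarrow> complex^'n) \<Rightarrow> bool" where
  "orthon k w \<longleftrightarrow> (\<forall>i<k. \<forall>j<k. cinner (w i) (w j) = (if i = j then 1 else 0))"

lemma norm_one_cinner: assumes "cinner x x = 1" shows "norm x = 1"
proof -
  have "complex_of_real ((norm x)^2) = 1" using assms by (simp only: cinner_self)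
  then have "(norm x)^2 = 1^2" by (simp only: of_real_eq_1_iff power_one)
  then show ?thesis by (simp only: power2_eq_iff_nonneg norm_ge_zero zero_le_one)
qed

lemma orth_ext:
  fixes w :: "nat \<Rightarrow> complex^'n"
  assumes ow: "orthon k w" and k: "k < CARD('n)"
  shows "\<exists>x. norm x = 1 \<and> (\<forall>i<k. cinner (w i) x = 0)"
proof -
  define P where "P x = x - (\<Sum>i<k. cinner (w i) x *s w i)" for x
  have "\<exists>x. P x \<noteq> 0"
  proof (rule ccontr)
    assume "\<not> (\<exists>x. P x \<noteq> 0)"
    then have P0: "P x = 0" for x by blast
    have "UNIV \<subseteq> vec.span (w ` {..<k})"
    proof
      fix x :: "complex^'n"
      have "x = (\<Sum>i<k. cinner (w i) x *s w i)" using P0[of x] by (simp add: P_def)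
      also have "\<dots> \<in> vec.span (w ` {..<k})"
        by (intro vec.span_sum vec.span_scale vec.span_base) auto
      finally show "x \<in> vec.span (w ` {..<k})" .
    qed
    then have "vec.dim (UNIV::(complex^'n) set) \<le> card (w ` {..<k})" by (rule vec.dim_le_card) simp
    also have "\<dots> \<le> k" using card_image_le[of "{..<k}" w] by simp
    finally show False using k by (simp add: card_cart_basis)
  qed
  then obtain x where x: "P x \<noteq> 0" by blast
  define y where "y = P x"
  have orth: "cinner (w j) y = 0" if j: "j < k" for j
  proof -
    have "cinner (w j) y = cinner (w j) x - (\<Sum>i<k. cinner (w i) x * cinner (w j) (w i))"
      by (simp add: y_def P_def cinner_diff_right cinner_sum_right cinner_scale_right)
    also have "(\<Sum>i<k. cinner (w i) x * cinner (w j) (w i)) = (\<Sum>i<k. if i = j then cinner (w i) x else 0)"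
      by (rule sum.cong) (use ow j in \<open>auto simp: orthon_def\<close>)
    also have "\<dots> = cinner (w j) x" using j by simp
    finally show ?thesis by simp
  qed
  define z where "z = (1 / norm y) *\<^sub>R y"
  have "y \<noteq> 0" using x y_def by simp
  then have "norm z = 1" by (simp add: z_def)
  moreover have "\<forall>i<k. cinner (w i) z = 0" using orth by (simp add: z_def scaleR_vs cinner_scale_right)
  ultimately show ?thesis by blast
qed

lemma orthon_Suc:
  assumes "orthon k w" "norm x = 1" "\<forall>i<k. cinner (w i) x = 0"
  shows "orthon (Suc k) (w(k := x))"
  unfolding orthon_def
proof (intro allI impI)
  fix i j assume i: "i < Suc k" and j: "j < Suc k"
  show "cinner ((w(k := x)) i) ((w(k := x)) j) = (if i = j then 1 else 0)"
  proof (cases "i = k"; cases "j = k")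
    assume "i = k" "j = k" then show ?thesis using assms(2) by (simp add: cinner_self)
  next
    assume "i = k" "j \<noteq> k" then show ?thesis using assms(3) j cinner_commute[of x "w j"] by simp
  next
    assume "i \<noteq> k" "j = k" then show ?thesis using assms(3) i by simp
  next
    assume "i \<noteq> k" "j \<noteq> k" then show ?thesis using assms(1) i j by (simp add: orthon_def)
  qed
qed

lemma orth_extend:
  fixes w :: "nat \<Rightarrow> complex^'n"
  shows "orthon k w \<Longrightarrow> k \<le> CARD('n) \<Longrightarrow> \<exists>w'. orthon CARD('n) w' \<and> (\<forall>i<k. w' i = w i)"
proof (induction "CARD('n) - k" arbitrary: k w)
  case 0 then have "k = CARD('n)" by simp
  then show ?case using 0 by blast
next
  case (Suc d)
  then have k: "k < CARD('n)" by simp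
  obtain x where x: "norm x = 1" "\<forall>i<k. cinner (w i) x = 0" using orth_ext[OF Suc.prems(1) k] by blast
  have o: "orthon (Suc k) (w(k := x))" by (rule orthon_Suc[OF Suc.prems(1) x])
  have d: "d = CARD('n) - Suc k" using Suc.hyps(2) by arith
  obtain w' where "orthon CARD('n) w'" "\<forall>i<Suc k. w' i = (w(k := x)) i"
    using Suc.hyps(1)[OF d o] k by auto
  then show ?case by auto
qed

lemma tidx_less: "tidx (c::'c::{finite,linorder}) < CARD('c)"
  unfolding tidx_def by (rule psubset_card_mono) auto

lemma tidx_mono: "(c::'c::{finite,linorder}) < c' \<Longrightarrow> tidx c < tidx c'"
  unfolding tidx_def by (rule psubset_card_mono) auto

lemma tidx_eq: "tidx (c::'c::{finite,linorder}) = tidx c' \<longleftrightarrow> c = c'"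
  by (metis less_irrefl linorder_neqE tidx_mono)

lemma tidx_image: "tidx ` (UNIV::'c::{finite,linorder} set) = {..<CARD('c)}"
proof -
  have inj: "inj (tidx :: 'c \<Rightarrow> nat)" by (simp add: inj_def tidx_eq)
  have "tidx ` (UNIV::'c set) \<subseteq> {..<CARD('c)}" using tidx_less by auto
  moreover have "card (tidx ` (UNIV::'c set)) = card {..<CARD('c)}" using card_image[OF inj] by simp
  ultimately show ?thesis by (intro card_subset_eq) auto
qed

lemma tidx_surj: "l < CARD('c::{finite,linorder}) \<Longrightarrow> \<exists>c::'c. tidx c = l"
  using tidx_image[where 'c='c] by (metis imageE lessThan_iff)

lemma bij_tidx: "bij_betw (tidx :: 'c::{finite,linorder} \<Rightarrow> nat) UNIV {..<CARD('c)}"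
  unfolding bij_betw_def by (simp add: inj_def tidx_eq tidx_image)

lemma sum_tidx:
  fixes g :: "'c::{finite,linorder} \<Rightarrow> 'v::comm_monoid_add"
  shows "(\<Sum>i\<in>UNIV. if tidx i = l then g i else 0) = (if l < CARD('c) then g (SOME i. tidx i = l) else 0)"
proof (cases "l < CARD('c)")
  case True
  obtain i0 :: 'c where i0: "tidx i0 = l" using tidx_surj[OF True] by blast
  have s: "(SOME i. tidx i = l) = i0" using i0 by (metis (mono_tags) someI_ex tidx_eq)
  have "(\<Sum>i\<in>UNIV. if tidx i = l then g i else 0) = (\<Sum>i\<in>UNIV. if i = i0 then g i else 0)"
    by (rule sum.cong) (auto simp: i0[symmetric] tidx_eq)
  then show ?thesis using True s by simp
next
  case False
  then have "tidx i \<noteq> l" for i :: 'c using tidx_less[of i] by auto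
  then show ?thesis using False by simp
qed



definition svinv :: "('a::finite, 'b::finite) cmat \<Rightarrow> nat \<Rightarrow> (nat \<Rightarrow> real) \<Rightarrow> (nat \<Rightarrow> complex^'a) \<Rightarrow> (nat \<Rightarrow> complex^'b) \<Rightarrow> bool" where
  "svinv A k s u v \<longleftrightarrow> orthon k u \<and> orthon k v \<and>
     (\<forall>i<k. A *v v i = complex_of_real (s i) *s u i \<and> cadj A *v u i = complex_of_real (s i) *s v i) \<and>
     (\<forall>i<k. 0 \<le> s i) \<and>
     (\<forall>i<k. \<forall>x y. norm x = 1 \<longrightarrow> norm y = 1 \<longrightarrow> (\<forall>j<i. cinner (u j) x = 0) \<longrightarrow> (\<forall>j<i. cinner (v j) y = 0)
        \<longrightarrow> x \<bullet> (A *v y) \<le> s i)"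

lemma continuous_cinner: "continuous_on S (\<lambda>x. cinner a x)"
  unfolding cinner_def by (intro continuous_intros)

lemma closed_orth: "closed ({x::complex^'n. norm x = 1} \<inter> (\<Inter>j\<in>{..<k}. {x. cinner (w j) x = 0}))"
proof (intro closed_Int closed_INT ballI)
  show "closed {x::complex^'n. norm x = 1}"
    by (rule closed_Collect_eq) (intro continuous_intros)+
  fix j show "closed {x::complex^'n. cinner (w j) x = 0}"
    by (rule closed_Collect_eq) (intro continuous_intros continuous_cinner)+
qed

lemma compact_orth: "compact ({x::complex^'n. norm x = 1} \<inter> (\<Inter>j\<in>{..<k}. {x. cinner (w j) x = 0}))"
proof -
  have "bounded ({x::complex^'n. norm x = 1} \<inter> (\<Inter>j\<in>{..<k}. {x. cinner (w j) x = 0}))"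
    by (rule bounded_subset[OF bounded_cball[of 0 1]]) auto
  then show ?thesis using closed_orth by (simp add: compact_eq_bounded_closed)
qed

lemma unit_scale: "y \<noteq> 0 \<Longrightarrow> norm ((1 / norm y) *\<^sub>R y) = 1" by simp

lemma sv_step:
  fixes A :: "('a::finite, 'b::finite) cmat"
  assumes inv: "svinv A k s u v" and km: "k < CARD('a)" and kn: "k < CARD('b)"
  shows "\<exists>s0 x0 y0. svinv A (Suc k) (s(k := s0)) (u(k := x0)) (v(k := y0))"
proof -
  have ou: "orthon k u" and ov: "orthon k v" using inv by (auto simp: svinv_def)
  have eqs: "\<And>i. i < k \<Longrightarrow> A *v v i = complex_of_real (s i) *s u i \<and> cadj A *v u i = complex_of_real (s i) *s v i"
    using inv by (auto simp: svinv_def)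
  define S1 where "S1 = {x::complex^'a. norm x = 1} \<inter> (\<Inter>j\<in>{..<k}. {x. cinner (u j) x = 0})"
  define S2 where "S2 = {y::complex^'b. norm y = 1} \<inter> (\<Inter>j\<in>{..<k}. {y. cinner (v j) y = 0})"
  have S1: "x \<in> S1 \<longleftrightarrow> norm x = 1 \<and> (\<forall>j<k. cinner (u j) x = 0)" for x unfolding S1_def by auto
  have S2: "y \<in> S2 \<longleftrightarrow> norm y = 1 \<and> (\<forall>j<k. cinner (v j) y = 0)" for y unfolding S2_def by auto
  have "S1 \<noteq> {}" using orth_ext[OF ou km] S1 by blast
  moreover have "S2 \<noteq> {}" using orth_ext[OF ov kn] S2 by blast
  ultimately have ne: "S1 \<times> S2 \<noteq> {}" by simp
  have cpt: "compact (S1 \<times> S2)" unfolding S1_def S2_def by (intro compact_Times compact_orth)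
  have c1: "continuous_on (S1 \<times> S2) (\<lambda>p. A *v snd p)"
    using continuous_on_compose[OF continuous_on_snd[OF continuous_on_id] matrix_vector_mult_linear_continuous_on[of _ A]]
    by (simp add: o_def)
  have cont: "continuous_on (S1 \<times> S2) (\<lambda>p. fst p \<bullet> (A *v snd p))"
    by (intro continuous_intros c1)
  obtain p0 where p0: "p0 \<in> S1 \<times> S2" and pmax: "\<And>p. p \<in> S1 \<times> S2 \<Longrightarrow> fst p \<bullet> (A *v snd p) \<le> fst p0 \<bullet> (A *v snd p0)"
    using continuous_attains_sup[OF cpt ne cont] by blast
  define x0 where "x0 = fst p0"
  define y0 where "y0 = snd p0"
  define s0 where "s0 = x0 \<bullet> (A *v y0)"
  have x0: "x0 \<in> S1" and y0: "y0 \<in> S2" using p0 by (auto simp: x0_def y0_def mem_Times_iff)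
  have max: "\<And>x y. x \<in> S1 \<Longrightarrow> y \<in> S2 \<Longrightarrow> x \<bullet> (A *v y) \<le> s0"
    using pmax unfolding s0_def x0_def y0_def by force
  have nx0: "norm x0 = 1" and ny0: "norm y0 = 1" using x0 y0 S1 S2 by auto
  define w where "w = A *v y0"
  define z where "z = cadj A *v x0"
  have worth: "cinner (u j) w = 0" if "j < k" for j
  proof -
    have "cinner (u j) w = cinner (cadj A *v u j) y0" unfolding w_def by (rule cadj_mult_vec)
    also have "\<dots> = cinner (complex_of_real (s j) *s v j) y0" using eqs[OF that] by simp
    also have "\<dots> = 0" using y0 S2 that by (simp add: cinner_scale_left)
    finally show ?thesis .
  qed
  have zorth: "cinner (v j) z = 0" if "j < k" for j
  proof -
    have "cinner (v j) z = cinner (cadj (cadj A) *v v j) x0" unfolding z_def by (rule cadj_mult_vec)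
    also have "\<dots> = cinner (complex_of_real (s j) *s u j) x0" using eqs[OF that] by (simp add: cadj_cadj)
    also have "\<dots> = 0" using x0 S1 that by (simp add: cinner_scale_left)
    finally show ?thesis .
  qed
  have sw: "s0 = norm w"
  proof (rule antisym)
    have "s0 = x0 \<bullet> w" by (simp add: s0_def w_def)
    also have "\<dots> \<le> norm x0 * norm w" by (rule norm_cauchy_schwarz)
    finally show "s0 \<le> norm w" using nx0 by simp
    show "norm w \<le> s0"
    proof (cases "w = 0")
      case True then show ?thesis by (simp add: s0_def w_def)
    next
      case False
      have "norm ((1 / norm w) *\<^sub>R w) = 1" using False by simp
      moreover have "\<forall>j<k. cinner (u j) ((1 / norm w) *\<^sub>R w) = 0" using worth by (simp add: scaleR_vs cinner_scale_right)
      ultimately have "(1 / norm w) *\<^sub>R w \<in> S1" using S1 by blast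
      from max[OF this y0] show ?thesis using False
        by (simp add: w_def[symmetric] inner_commute power2_norm_eq_inner[symmetric] power2_eq_square)
    qed
  qed
  have phi: "x0 \<bullet> (A *v y) = z \<bullet> y" for y
    by (simp add: z_def Re_cinner[symmetric] cadj_mult_vec)
  have sz: "s0 = norm z"
  proof (rule antisym)
    have "s0 = z \<bullet> y0" by (simp add: s0_def phi)
    also have "\<dots> \<le> norm z * norm y0" by (rule norm_cauchy_schwarz)
    finally show "s0 \<le> norm z" using ny0 by simp
    show "norm z \<le> s0"
    proof (cases "z = 0")
      case True then show ?thesis by (simp add: sw)
    next
      case False
      have "norm ((1 / norm z) *\<^sub>R z) = 1" using False by simp
      moreover have "\<forall>j<k. cinner (v j) ((1 / norm z) *\<^sub>R z) = 0" using zorth by (simp add: scaleR_vs cinner_scale_right)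
      ultimately have "(1 / norm z) *\<^sub>R z \<in> S2" using S2 by blast
      from max[OF x0 this] show ?thesis using False
        by (simp add: phi power2_norm_eq_inner[symmetric] power2_eq_square)
    qed
  qed
  have wx: "w = s0 *\<^sub>R x0"
  proof -
    have "(norm (w - s0 *\<^sub>R x0))^2 = (norm w)^2 - 2 * s0 * (x0 \<bullet> w) + s0^2 * (norm x0)^2"
      unfolding power2_norm_eq_inner by (simp add: inner_diff_left inner_diff_right inner_commute power2_eq_square algebra_simps)
    also have "\<dots> = 0" using nx0 sw by (simp add: s0_def w_def power2_eq_square)
    finally show ?thesis by simp
  qed
  have zy: "z = s0 *\<^sub>R y0"
  proof -
    have "(norm (z - s0 *\<^sub>R y0))^2 = (norm z)^2 - 2 * s0 * (z \<bullet> y0) + s0^2 * (norm y0)^2"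
      unfolding power2_norm_eq_inner by (simp add: inner_diff_left inner_diff_right inner_commute power2_eq_square algebra_simps)
    also have "\<dots> = 0" using ny0 sz by (simp add: s0_def phi power2_eq_square)
    finally show ?thesis by simp
  qed
  have s0pos: "0 \<le> s0" using sw by simp
  show ?thesis
  proof (intro exI)
    show "svinv A (Suc k) (s(k := s0)) (u(k := x0)) (v(k := y0))"
      unfolding svinv_def
    proof (intro conjI allI impI)
      show "orthon (Suc k) (u(k := x0))" by (rule orthon_Suc[OF ou nx0]) (use x0 S1 in auto)
      show "orthon (Suc k) (v(k := y0))" by (rule orthon_Suc[OF ov ny0]) (use y0 S2 in auto)
      fix i assume i: "i < Suc k"
      show "A *v (v(k := y0)) i = complex_of_real ((s(k := s0)) i) *s (u(k := x0)) i"
        using eqs[of i] i wx by (cases "i = k") (auto simp: w_def scaleR_vs)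
      show "cadj A *v (u(k := x0)) i = complex_of_real ((s(k := s0)) i) *s (v(k := y0)) i"
        using eqs[of i] i zy by (cases "i = k") (auto simp: z_def scaleR_vs)
      show "0 \<le> (s(k := s0)) i" using inv i s0pos by (cases "i = k") (auto simp: svinv_def)
    next
      fix i x y assume i: "i < Suc k" and nx: "norm x = 1" and ny: "norm y = 1"
        and ox: "\<forall>j<i. cinner ((u(k := x0)) j) x = 0" and oy: "\<forall>j<i. cinner ((v(k := y0)) j) y = 0"
      show "x \<bullet> (A *v y) \<le> (s(k := s0)) i"
      proof (cases "i = k")
        case True
        then have "x \<in> S1" "y \<in> S2" using nx ny ox oy S1 S2 by auto
        then show ?thesis using max True by simp
      next
        case False
        then have "i < k" using i by simp
        moreover have "\<forall>j<i. cinner (u j) x = 0" "\<forall>j<i. cinner (v j) y = 0" using ox oy \<open>i < k\<close> by auto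
        ultimately show ?thesis using inv nx ny False by (auto simp: svinv_def)
      qed
    qed
  qed
qed

lemma sv_exists_k:
  fixes A :: "('a::finite, 'b::finite) cmat"
  shows "k \<le> min CARD('a) CARD('b) \<Longrightarrow> \<exists>s u v. svinv A k s u v"
proof (induction k)
  case 0 show ?case by (auto simp: svinv_def orthon_def)
next
  case (Suc k)
  then obtain s u v where "svinv A k s u v" by auto
  then show ?case using sv_step[of A k s u v] Suc.prems by auto
qed



lemma sorted_prod_aux:
  fixes a b :: "nat \<Rightarrow> real"
  assumes b: "\<And>i j. i \<le> j \<Longrightarrow> j < m \<Longrightarrow> b j \<le> b i"
    and eq: "(\<Prod>l<m. [:- complex_of_real (a l), 1:]) = (\<Prod>l<m. [:- complex_of_real (b l), 1:])"
    and jm: "j < m" and pre: "\<And>l. l < j \<Longrightarrow> a l = b l" and lt: "b j < a j"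
  shows False
proof -
  have split: "{..<m} = {..<j} \<union> {j..<m}" using jm by auto
  have disj: "{..<j} \<inter> {j..<m} = {}" by auto
  define Q where "Q = (\<Prod>l<j. [:- complex_of_real (a l), 1:])"
  define Ra where "Ra = (\<Prod>l\<in>{j..<m}. [:- complex_of_real (a l), 1:])"
  define Rb where "Rb = (\<Prod>l\<in>{j..<m}. [:- complex_of_real (b l), 1:])"
  have Qb: "Q = (\<Prod>l<j. [:- complex_of_real (b l), 1:])" unfolding Q_def by (rule prod.cong) (auto simp: pre)
  have "Q * Ra = Q * Rb"
    using eq unfolding split prod.union_disjoint[OF finite_lessThan finite_atLeastLessThan disj]
    by (simp add: Q_def Ra_def Rb_def Qb[symmetric])
  moreover have "Q \<noteq> 0" unfolding Q_def by (simp add: prod_zero_iff)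
  ultimately have "Ra = Rb" by simp
  moreover have "poly Ra (complex_of_real (a j)) = 0"
    unfolding Ra_def poly_prod using jm by (intro prod_zero) auto
  moreover have "poly Rb (complex_of_real (a j)) \<noteq> 0"
  proof -
    have pl: "poly [:- c, 1:] x = x - c" for c x :: complex by simp
    have nz: "poly [:- complex_of_real (b l), 1:] (complex_of_real (a j)) \<noteq> 0" if "l \<in> {j..<m}" for l
    proof -
      have "b l \<le> b j" using b that by auto
      then have "a j \<noteq> b l" using lt by simp
      then show ?thesis unfolding pl by simp
    qed
    show ?thesis unfolding Rb_def poly_prod using nz by (simp only: prod_zero_iff finite_atLeastLessThan) blast
  qed
  ultimately show False by simp
qed

lemma sorted_prod_eq:
  fixes a b :: "nat \<Rightarrow> real"
  assumes a: "\<And>i j. i \<le> j \<Longrightarrow> j < m \<Longrightarrow> a j \<le> a i"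
    and b: "\<And>i j. i \<le> j \<Longrightarrow> j < m \<Longrightarrow> b j \<le> b i"
    and eq: "\<And>x::complex. (\<Prod>l<m. x - complex_of_real (a l)) = (\<Prod>l<m. x - complex_of_real (b l))"
  shows "\<forall>l<m. a l = b l"
proof (rule ccontr)
  assume "\<not> (\<forall>l<m. a l = b l)"
  then have ex: "\<exists>l. l < m \<and> a l \<noteq> b l" by auto
  define j where "j = (LEAST l. l < m \<and> a l \<noteq> b l)"
  have j: "j < m \<and> a j \<noteq> b j" unfolding j_def by (rule LeastI_ex[OF ex])
  have pre: "a l = b l" if "l < j" for l
    using not_less_Least[of l "\<lambda>l. l < m \<and> a l \<noteq> b l"] that j unfolding j_def[symmetric] by auto
  have "poly (\<Prod>l<m. [:- complex_of_real (a l), 1:]) = poly (\<Prod>l<m. [:- complex_of_real (b l), 1:])"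
    by (rule ext) (simp add: poly_prod eq[simplified] add.commute)
  then have peq: "(\<Prod>l<m. [:- complex_of_real (a l), 1:]) = (\<Prod>l<m. [:- complex_of_real (b l), 1:])"
    by (simp add: poly_eq_poly_eq_iff)
  show False
  proof (cases "b j < a j")
    case True
    show False by (rule sorted_prod_aux[OF b peq _ pre True]) (use j in auto)
  next
    case False
    then have "a j < b j" using j by auto
    show False by (rule sorted_prod_aux[OF a peq[symmetric] _ _ \<open>a j < b j\<close>]) (use j pre in auto)
  qed
qed

definition umat :: "(nat \<Rightarrow> (complex, 'n::{finite,linorder}) vec) \<Rightarrow> ((complex, 'n) vec, 'n) vec" where
  "umat w = (\<chi> p i. w (tidx i) $ p)"

lemma unitary_of_orthon:
  fixes w :: "nat \<Rightarrow> (complex, 'n::{finite,linorder}) vec"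
  assumes ow: "orthon CARD('n) w"
  shows "cadj (umat w) ** umat w = mat 1"
    and "umat w ** cadj (umat w) = mat 1"
    and "cadj (umat w) *v x = (\<chi> i. cinner (w (tidx i)) x)"
proof -
  show 1: "cadj (umat w) ** umat w = mat 1"
  proof -
    have "(cadj (umat w) ** umat w) $ i $ j = mat 1 $ i $ j" for i j
    proof -
      have "(cadj (umat w) ** umat w) $ i $ j = cinner (w (tidx i)) (w (tidx j))"
        by (simp add: umat_def cadj_def matrix_matrix_mult_def cinner_def)
      also have "\<dots> = (if tidx i = tidx j then 1 else 0)" using ow tidx_less[of i] tidx_less[of j] by (simp add: orthon_def)
      also have "\<dots> = mat 1 $ i $ j" by (simp add: mat_def tidx_eq)
      finally show ?thesis .
    qed
    then show ?thesis by (simp add: vec_eq_iff)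
  qed
  show "umat w ** cadj (umat w) = mat 1"
    using 1 matrix_left_right_inverse by blast
  show "cadj (umat w) *v x = (\<chi> i. cinner (w (tidx i)) x)"
    by (simp add: vec_eq_iff cadj_def matrix_vector_mult_def cinner_def umat_def)
qed



lemma tidx_some: "l < CARD('c::{finite,linorder}) \<Longrightarrow> tidx (SOME i::'c. tidx i = l) = l"
  using tidx_surj[of l] by (metis (mono_tags) someI_ex)

lemma svals_exist:
  fixes A :: "('a::{finite,linorder}, 'b::{finite,linorder}) cmat"
  shows "\<exists>s. is_svals A s"
proof -
  define m where "m = CARD('a)"
  define n where "n = CARD('b)"
  define r where "r = min m n"
  obtain s u v where inv: "svinv A r s u v" using sv_exists_k[of r A] by (auto simp: r_def m_def n_def)
  have ou: "orthon r u" and ov: "orthon r v" using inv by (auto simp: svinv_def)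
  have eqs: "\<And>i. i < r \<Longrightarrow> A *v v i = complex_of_real (s i) *s u i \<and> cadj A *v u i = complex_of_real (s i) *s v i"
    using inv by (auto simp: svinv_def)
  have spos: "\<And>i. i < r \<Longrightarrow> 0 \<le> s i" using inv by (auto simp: svinv_def)
  have smax: "\<And>i x y. i < r \<Longrightarrow> norm x = 1 \<Longrightarrow> norm y = 1 \<Longrightarrow> (\<forall>j<i. cinner (u j) x = 0) \<Longrightarrow> (\<forall>j<i. cinner (v j) y = 0)
        \<Longrightarrow> x \<bullet> (A *v y) \<le> s i"
    using inv unfolding svinv_def by blast
  obtain uu where uu: "orthon m uu" "\<And>i. i < r \<Longrightarrow> uu i = u i"
    using orth_extend[OF ou] by (auto simp: r_def m_def)
  obtain vv where vv: "orthon n vv" "\<And>i. i < r \<Longrightarrow> vv i = v i"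
    using orth_extend[OF ov] by (auto simp: r_def n_def)
  define sv where "sv i = (if i < r then s i else 0)" for i
  have noninc: "s j \<le> s i" if ij: "i \<le> j" and jr: "j < r" for i j
  proof -
    have nu: "norm (u j) = 1" using ou jr by (intro norm_one_cinner) (simp add: orthon_def)
    have nv: "norm (v j) = 1" using ov jr by (intro norm_one_cinner) (simp add: orthon_def)
    have "\<forall>l<i. cinner (u l) (u j) = 0" using ou ij jr by (auto simp: orthon_def)
    moreover have "\<forall>l<i. cinner (v l) (v j) = 0" using ov ij jr by (auto simp: orthon_def)
    ultimately have "u j \<bullet> (A *v v j) \<le> s i" using smax[OF _ nu nv] ij jr by simp
    moreover have "u j \<bullet> (A *v v j) = s j"
    proof -
      have "u j \<bullet> (A *v v j) = Re (cinner (u j) (complex_of_real (s j) *s u j))"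
        using eqs[OF jr] by (simp add: Re_cinner)
      also have "\<dots> = s j" using ou jr by (simp add: cinner_scale_right orthon_def)
      finally show ?thesis .
    qed
    ultimately show ?thesis by simp
  qed
  define U where "U = (umat uu :: ((complex,'a) vec,'a) vec)"
  define V where "V = (umat vv :: ((complex,'b) vec,'b) vec)"
  have U1: "cadj U ** U = mat 1" "U ** cadj U = mat 1" and U2: "\<And>x. cadj U *v x = (\<chi> i. cinner (uu (tidx i)) x)"
    using unitary_of_orthon[of uu] uu(1) by (auto simp: U_def m_def)
  have V1: "cadj V ** V = mat 1" "V ** cadj V = mat 1"
    using unitary_of_orthon[of vv] vv(1) by (auto simp: V_def n_def)
  have colA: "A *v vv l = (if l < m then complex_of_real (sv l) *s uu l else 0)" if ln: "l < n" for l
  proof (cases "l < r")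
    case True
    then show ?thesis using eqs[OF True] uu(2)[OF True] vv(2)[OF True] by (simp add: sv_def r_def)
  next
    case False
    then have lm: "\<not> l < m" and rm: "r = m" using ln by (auto simp: r_def)
    define w where "w = A *v vv l"
    have "cinner (uu i) w = 0" if im: "i < m" for i
    proof -
      have ir: "i < r" using im rm by simp
      have "cinner (uu i) w = cinner (cadj A *v u i) (vv l)" using uu(2)[OF ir] by (simp add: w_def cadj_mult_vec)
      also have "\<dots> = cnj (complex_of_real (s i)) * cinner (vv i) (vv l)"
        using eqs[OF ir] vv(2)[OF ir] by (simp add: cinner_scale_left)
      also have "cinner (vv i) (vv l) = 0" using vv(1) im lm ln rm ir by (auto simp: orthon_def r_def)
      finally show ?thesis by simp
    qed
    then have "cadj U *v w = 0" using tidx_less[where 'c='a] by (simp add: U2 vec_eq_iff m_def)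
    then have "w = 0" by (metis U1(2) matrix_vector_mul_assoc matrix_vector_mul_lid matrix_vector_mult_0_right)
    then show ?thesis using lm by (simp add: w_def)
  qed
  define D where "D = ((\<chi> i j. if tidx i = tidx j then complex_of_real (sv (tidx i)) else 0) :: ('a,'b) cmat)"
  have AV: "A ** V = U ** D"
  proof -
    have "(A ** V) $ p $ j = (U ** D) $ p $ j" for p j
    proof -
      have "(A ** V) $ p $ j = (A *v vv (tidx j)) $ p"
        by (simp add: matrix_matrix_mult_def matrix_vector_mult_def V_def umat_def)
      also have "\<dots> = (if tidx j < m then complex_of_real (sv (tidx j)) * uu (tidx j) $ p else 0)"
        using colA[of "tidx j"] tidx_less[of j] by (simp add: n_def)
      also have "\<dots> = (U ** D) $ p $ j"
      proof -
        have "(U ** D) $ p $ j = (\<Sum>i\<in>UNIV. if tidx (i::'a) = tidx j then uu (tidx i) $ p * complex_of_real (sv (tidx j)) else 0)"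
          by (simp add: matrix_matrix_mult_def U_def D_def umat_def if_distrib cong: if_cong)
        also have "\<dots> = (if tidx j < m then uu (tidx (SOME i::'a. tidx i = tidx j)) $ p * complex_of_real (sv (tidx j)) else 0)"
          by (subst sum_tidx) (simp add: m_def)
        also have "\<dots> = (if tidx j < m then complex_of_real (sv (tidx j)) * uu (tidx j) $ p else 0)"
          by (simp add: tidx_some m_def)
        finally show ?thesis by simp
      qed
      finally show ?thesis .
    qed
    then show ?thesis by (simp add: vec_eq_iff)
  qed
  have AD: "A = U ** D ** cadj V"
  proof -
    have "A = A ** (V ** cadj V)" using V1 by simp
    also have "\<dots> = U ** D ** cadj V" by (simp add: matrix_mul_assoc AV)
    finally show ?thesis .
  qed
  have "is_svals A sv"
    unfolding is_svals_def
  proof (intro conjI allI impI)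
    fix i assume "min (card (UNIV::'a set)) (card (UNIV::'b set)) \<le> i"
    then show "sv i = 0" by (auto simp: sv_def r_def m_def n_def)
  next
    fix i show "0 \<le> sv i" using spos by (simp add: sv_def)
  next
    fix i j :: nat assume "i \<le> j"
    then show "sv j \<le> sv i" using noninc spos by (auto simp: sv_def)
  next
    show "\<exists>(U::('a,'a) cmat) (V::('b,'b) cmat). unitary U \<and> unitary V \<and>
        A = U ** (\<chi> i j. if tidx i = tidx j then complex_of_real (sv (tidx i)) else 0) ** cadj V"
      using U1 V1 AD unfolding unitary_def D_def by blast
  qed
  then show ?thesis by blast
qed



lemma mm_diff_l: "(A::'x::comm_ring_1^'n^'m) ** (B - C) = A ** B - A ** C"
  by (simp add: vec_eq_iff matrix_matrix_mult_def algebra_simps sum_subtractf)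
lemma mm_diff_r: "((B::'x::comm_ring_1^'n^'m) - C) ** A = B ** A - C ** A"
  by (simp add: vec_eq_iff matrix_matrix_mult_def algebra_simps sum_subtractf)

lemma mm_mat_r: "(X::'x::comm_ring_1^'n^'m) ** mat c = (\<chi> i j. X$i$j * c)"
proof -
  have "(\<Sum>l\<in>UNIV. X$i$l * (if l = k then c else 0)) = X$i$k * c" for i k
  proof -
    have "(\<Sum>l\<in>UNIV. X$i$l * (if l = k then c else 0)) = (\<Sum>l\<in>UNIV. if l = k then X$i$l * c else 0)"
      by (rule sum.cong) auto
    then show ?thesis by simp
  qed
  then show ?thesis by (simp add: vec_eq_iff matrix_matrix_mult_def mat_def)
qed

lemma mm_mid: "(X::'x::comm_ring_1^'n^'m) ** mat c ** Y = (\<chi> i j. c * (X ** Y)$i$j)"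
  unfolding mm_mat_r by (simp add: vec_eq_iff matrix_matrix_mult_def sum_distrib_left ac_simps)

lemma charpoly_svals:
  fixes A :: "('a::{finite,linorder}, 'b::{finite,linorder}) cmat"
  assumes sv: "is_svals A s"
  shows "det (mat x - A ** cadj A) = (\<Prod>l<CARD('a). x - complex_of_real ((s l)^2))"
proof -
  have s0: "\<And>i. min CARD('a) CARD('b) \<le> i \<Longrightarrow> s i = 0" using sv by (simp add: is_svals_def)
  obtain U :: "('a,'a) cmat" and V :: "('b,'b) cmat" where U: "unitary U" and V: "unitary V"
    and AD: "A = U ** (\<chi> i j. if tidx i = tidx j then complex_of_real (s (tidx i)) else 0) ** cadj V"
    using sv unfolding is_svals_def by blast
  define D :: "('a,'b) cmat" where "D = (\<chi> i j. if tidx i = tidx j then complex_of_real (s (tidx i)) else 0)"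
  define L where "L = D ** cadj D"
  have Leq: "L $ i $ i' = (if i = i' then complex_of_real ((s (tidx i))^2) else 0)" for i i'
  proof -
    have "L $ i $ i' = (\<Sum>j\<in>UNIV. (if tidx i = tidx (j::'b) then complex_of_real (s (tidx i)) else 0) *
         cnj (if tidx i' = tidx j then complex_of_real (s (tidx i')) else 0))"
      by (simp add: L_def D_def matrix_matrix_mult_def cadj_def)
    also have "\<dots> = (\<Sum>j\<in>UNIV. if tidx (j::'b) = tidx i then (if i = i' then complex_of_real ((s (tidx i))^2) else 0) else 0)"
      by (rule sum.cong) (auto simp: tidx_eq power2_eq_square)
    also have "\<dots> = (if i = i' then complex_of_real ((s (tidx i))^2) else 0)"
    proof (cases "tidx i < CARD('b)")
      case True then show ?thesis by (subst sum_tidx) simp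
    next
      case False
      then have "s (tidx i) = 0" by (intro s0) simp
      then show ?thesis by (subst sum_tidx) auto
    qed
    finally show ?thesis .
  qed
  have U1: "U ** cadj U = mat 1" using U by (simp add: unitary_def)
  have V1: "cadj V ** V = mat 1" using V by (simp add: unitary_def)
  have AA: "A ** cadj A = U ** L ** cadj U"
  proof -
    have "A ** cadj A = U ** D ** cadj V ** (V ** (cadj D ** cadj U))"
      by (simp add: AD D_def cadj_mult cadj_cadj)
    also have "\<dots> = U ** D ** (cadj V ** V) ** (cadj D ** cadj U)"
      by (simp add: matrix_mul_assoc)
    also have "\<dots> = U ** L ** cadj U" by (simp add: V1 L_def matrix_mul_assoc)
    finally show ?thesis .
  qed
  have "mat x - A ** cadj A = U ** (mat x - L) ** cadj U"
  proof -
    have "U ** (mat x - L) ** cadj U = U ** mat x ** cadj U - U ** L ** cadj U"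
      by (simp add: mm_diff_l mm_diff_r)
    also have "U ** mat x ** cadj U = mat x"
      unfolding mm_mid U1 by (simp add: vec_eq_iff mat_def)
    finally show ?thesis using AA by simp
  qed
  then have "det (mat x - A ** cadj A) = det (mat x - L) * (det U * det (cadj U))"
    by (simp add: det_mul)
  also have "det U * det (cadj U) = 1" using U1 by (metis det_I det_mul)
  also have "det (mat x - L) = (\<Prod>i\<in>UNIV. x - complex_of_real ((s (tidx (i::'a)))^2))"
    by (subst det_diagonal) (simp_all add: mat_def Leq)
  also have "\<dots> = (\<Prod>l<CARD('a). x - complex_of_real ((s l)^2))"
    by (rule prod.reindex_bij_betw[OF bij_tidx])
  finally show ?thesis by simp
qed

lemma svals_unique:
  fixes A :: "('a::{finite,linorder}, 'b::{finite,linorder}) cmat"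
  assumes s: "is_svals A s" and t: "is_svals A t"
  shows "s = t"
proof -
  have sq: "\<forall>l<CARD('a). (s l)^2 = (t l)^2"
  proof (rule sorted_prod_eq)
    fix i j :: nat assume "i \<le> j" "j < CARD('a)"
    then show "(s j)^2 \<le> (s i)^2" using s by (intro power_mono) (auto simp: is_svals_def)
  next
    fix i j :: nat assume "i \<le> j" "j < CARD('a)"
    then show "(t j)^2 \<le> (t i)^2" using t by (intro power_mono) (auto simp: is_svals_def)
  next
    fix x :: complex
    show "(\<Prod>l<CARD('a). x - complex_of_real ((s l)^2)) = (\<Prod>l<CARD('a). x - complex_of_real ((t l)^2))"
      using charpoly_svals[OF s, of x] charpoly_svals[OF t, of x] by simp
  qed
  show ?thesis
  proof
    fix l
    show "s l = t l"
    proof (cases "l < CARD('a)")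
      case True
      then have "(s l)^2 = (t l)^2" using sq by blast
      moreover have "0 \<le> s l" "0 \<le> t l" using s t by (auto simp: is_svals_def)
      ultimately show ?thesis by (simp add: power2_eq_iff_nonneg)
    next
      case False
      then have "min CARD('a) CARD('b) \<le> l" by simp
      then show ?thesis using s t by (simp add: is_svals_def)
    qed
  qed
qed

lemma svals_nonneg: "0 \<le> svals (A::('a::{finite,linorder}, 'b::{finite,linorder}) cmat) i"
proof -
  have "\<exists>!s. is_svals A s" using svals_exist[of A] svals_unique[of A] by blast
  then have "is_svals A (svals A)" unfolding svals_def by (rule theI')
  then show ?thesis by (simp add: is_svals_def)
qed




lemma descent_aux:
  fixes f :: "'v::real_inner \<Rightarrow> real" and gf :: "'v \<Rightarrow> 'v"
  assumes grad: "\<And>W. (f has_derivative (\<lambda>H. gf W \<bullet> H)) (at W)"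
    and lip: "\<And>V W. norm (gf V - gf W) \<le> L * norm (V - W)"
  shows "\<bar>f y - f x - gf x \<bullet> (y - x)\<bar> \<le> L / 2 * (norm (y - x))\<^sup>2"
proof -
  define h where "h = y - x"
  have line: "\<And>s. ((\<lambda>s. f (x + s *\<^sub>R h)) has_real_derivative (gf (x + s *\<^sub>R h) \<bullet> h)) (at s)"
  proof -
    fix s :: real
    have l: "((\<lambda>s. x + s *\<^sub>R h) has_derivative (\<lambda>d. d *\<^sub>R h)) (at s)"
      by (auto intro!: derivative_eq_intros)
    have "((\<lambda>s. f (x + s *\<^sub>R h)) has_derivative (\<lambda>d. gf (x + s *\<^sub>R h) \<bullet> (d *\<^sub>R h))) (at s)"
      using has_derivative_compose[OF l grad] by simp
    moreover have "(\<lambda>d. gf (x + s *\<^sub>R h) \<bullet> (d *\<^sub>R h)) = (*) (gf (x + s *\<^sub>R h) \<bullet> h)"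
      by (auto simp: algebra_simps)
    ultimately show "?thesis s" unfolding has_field_derivative_def by simp
  qed
  have key: "\<bar>gf (x + s *\<^sub>R h) \<bullet> h - gf x \<bullet> h\<bar> \<le> L * s * (norm h)\<^sup>2" if "0 \<le> s" for s
  proof -
    have "\<bar>gf (x + s *\<^sub>R h) \<bullet> h - gf x \<bullet> h\<bar> = \<bar>(gf (x + s *\<^sub>R h) - gf x) \<bullet> h\<bar>"
      by (simp add: inner_diff_left)
    also have "\<dots> \<le> norm (gf (x + s *\<^sub>R h) - gf x) * norm h" by (rule Cauchy_Schwarz_ineq2)
    also have "\<dots> \<le> (L * norm (s *\<^sub>R h)) * norm h"
      using lip[of "x + s *\<^sub>R h" x] by (simp add: mult_right_mono)
    also have "\<dots> = L * s * (norm h)\<^sup>2" using that by (simp add: power2_eq_square)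
    finally show ?thesis .
  qed
  have up: "f y - f x - gf x \<bullet> h \<le> L / 2 * (norm h)\<^sup>2"
  proof -
    define \<phi> where "\<phi> = (\<lambda>s. f (x + s *\<^sub>R h) - s * (gf x \<bullet> h) - L / 2 * s\<^sup>2 * (norm h)\<^sup>2)"
    have "\<phi> 1 \<le> \<phi> 0"
    proof (rule DERIV_nonpos_imp_nonincreasing[of 0 1])
      fix s :: real assume s: "0 \<le> s" "s \<le> 1"
      have "(\<phi> has_real_derivative (gf (x + s *\<^sub>R h) \<bullet> h - gf x \<bullet> h - L * s * (norm h)\<^sup>2)) (at s)"
        unfolding \<phi>_def by (auto intro!: derivative_eq_intros line simp: power2_eq_square)
      moreover have "gf (x + s *\<^sub>R h) \<bullet> h - gf x \<bullet> h - L * s * (norm h)\<^sup>2 \<le> 0"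
        using key[OF s(1)] by linarith
      ultimately show "\<exists>y. DERIV \<phi> s :> y \<and> y \<le> 0" by blast
    qed simp
    then show ?thesis unfolding \<phi>_def h_def by simp
  qed
  have lo: "- (L / 2 * (norm h)\<^sup>2) \<le> f y - f x - gf x \<bullet> h"
  proof -
    define \<phi> where "\<phi> = (\<lambda>s. - f (x + s *\<^sub>R h) + s * (gf x \<bullet> h) - L / 2 * s\<^sup>2 * (norm h)\<^sup>2)"
    have "\<phi> 1 \<le> \<phi> 0"
    proof (rule DERIV_nonpos_imp_nonincreasing[of 0 1])
      fix s :: real assume s: "0 \<le> s" "s \<le> 1"
      have "(\<phi> has_real_derivative (- (gf (x + s *\<^sub>R h) \<bullet> h) + gf x \<bullet> h - L * s * (norm h)\<^sup>2)) (at s)"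
        unfolding \<phi>_def by (auto intro!: derivative_eq_intros line simp: power2_eq_square)
      moreover have "- (gf (x + s *\<^sub>R h) \<bullet> h) + gf x \<bullet> h - L * s * (norm h)\<^sup>2 \<le> 0"
        using key[OF s(1)] by linarith
      ultimately show "\<exists>y. DERIV \<phi> s :> y \<and> y \<le> 0" by blast
    qed simp
    then show ?thesis unfolding \<phi>_def h_def by simp
  qed
  show ?thesis using up lo unfolding h_def abs_le_iff by linarith
qed


lemma tangent_right:
  fixes g :: "real \<Rightarrow> real"
  assumes conv: "convex_on {0..} g" and c: "0 \<le> c" and xc: "c < x"
    and deriv: "(g has_real_derivative g') (at c within {0..})"
  shows "g x - g c \<ge> g' * (x - c)"
proof -
  let ?A' = "{c<..}"
  have "at c within ?A' \<noteq> bot" by (subst at_within_eq_bot_iff) auto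
  moreover from deriv have "((\<lambda>y. (g y - g c) / (y - c)) \<longlongrightarrow> g') (at c within ?A')"
  proof -
    have "((\<lambda>y. (g y - g c) / (y - c)) \<longlongrightarrow> g') (at c within {0..})"
      using deriv unfolding has_field_derivative_iff .
    moreover have "at c within ?A' \<le> at c within {0..}" by (rule at_le) (use c in auto)
    ultimately show ?thesis by (rule tendsto_mono[rotated])
  qed
  moreover from eventually_at_right_real[OF xc]
  have "eventually (\<lambda>y. (g y - g c) / (y - c) \<le> (g x - g c) / (x - c)) (at_right c)"
  proof eventually_elim
    fix y assume y: "y \<in> {c<..<x}"
    have "g y \<le> (g x - g c) / (x - c) * (y - c) + g c"
      proof (rule convex_onD_Icc')
      show "convex_on {c..x} g" by (rule convex_on_subset[OF conv]) (use c in auto)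
    qed (use y xc in auto)
    hence "g y - g c \<le> (g x - g c) / (x - c) * (y - c)" by simp
    thus "(g y - g c) / (y - c) \<le> (g x - g c) / (x - c)" using y xc by (simp add: field_split_simps)
  qed
  ultimately have "g' \<le> (g x - g c) / (x - c)" by (simp add: tendsto_upperbound)
  thus ?thesis using xc by (simp add: field_simps)
qed

lemma concave_tangent:
  fixes \<rho> \<rho>' :: "real \<Rightarrow> real"
  assumes conc: "concave_on {0..} \<rho>"
    and deriv: "\<And>t. 0 \<le> t \<Longrightarrow> (\<rho> has_real_derivative \<rho>' t) (at t within {0..})"
    and x: "0 \<le> x" and y: "0 \<le> y"
  shows "\<rho> y \<le> \<rho> x + \<rho>' x * (y - x)"
proof -
  have conv: "convex_on {0..} (\<lambda>t. - \<rho> t)" using conc by (simp add: concave_on_def)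
  have d: "((\<lambda>t. - \<rho> t) has_real_derivative - \<rho>' x) (at x within {0..})"
    using deriv[OF x] by (auto intro!: derivative_eq_intros)
  consider "x < y" | "y < x" | "x = y" by linarith
  then show ?thesis
  proof cases
    case 1
    from tangent_right[OF conv x 1 d] show ?thesis by simp
  next
    case 2
    have "(- \<rho> y) - (- \<rho> x) \<ge> (- \<rho>' x) * (y - x)"
      proof (rule convex_on_imp_above_tangent[OF conv])
      show "connected {0::real..}" by simp
      show "x \<in> interior {0..}" using 2 y by simp
      show "y \<in> {0..}" using y by simp
    qed (rule d)
    then show ?thesis by simp
  qed simp
qed



lemma arith_core:
  fixes lam w w' gD gE a b p \<mu> \<mu>' \<theta>1 \<theta>1' \<theta>2 L \<epsilon> fX fX' fZ oF oF' :: real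
  assumes opt: "lam*w' + (gD - \<theta>1*gE) + \<mu>/2*(a - 2*\<theta>1*p + \<theta>1^2*b) \<le> lam*w + (-\<theta>1*gE) + \<mu>/2*(\<theta>1^2*b)"
    and d1: "fX' - fZ - (gD - \<theta>2*gE) \<le> L/2*(a - 2*\<theta>2*p + \<theta>2^2*b)"
    and d2: "-(L/2*(\<theta>2^2*b)) \<le> fX - fZ - (-\<theta>2*gE)"
    and maj: "oF' - oF \<le> lam*(w'-w) + fX' - fX"
    and p: "2*p \<le> a + b" and a: "0 \<le> a" and b: "0 \<le> b" and L: "0 < L"
    and t2: "0 \<le> \<theta>2" "\<theta>2 \<le> 1/2" and t1: "0 \<le> \<theta>1" "0 \<le> \<theta>1'"
    and den: "0 < 1 - \<theta>1 - \<theta>1' - \<epsilon>"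
    and mm: "\<mu>' \<le> \<mu>" and b1: "\<theta>2*L \<le> \<mu>*\<theta>1" and b2: "(1-\<theta>2)*L \<le> \<mu>*(1-\<theta>1-\<theta>1'-\<epsilon>)"
    and eps: "0 < \<epsilon>"
  shows "oF' + \<mu>'*\<theta>1'/2*a - (oF + \<mu>*\<theta>1/2*b) \<le> -(\<epsilon>*L/2)*a"
proof -
  have e1: "oF' - oF \<le> -\<mu>/2*a + \<mu>*\<theta>1*p + L/2*a - L*\<theta>2*p + L*\<theta>2^2*b"
    using opt d1 d2 maj by (simp add: algebra_simps)
  have c0: "0 \<le> \<mu>*\<theta>1 - L*\<theta>2" using b1 by (simp add: algebra_simps)
  have e2: "(\<mu>*\<theta>1 - L*\<theta>2) * (2*p) \<le> (\<mu>*\<theta>1 - L*\<theta>2) * (a + b)"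
    using mult_left_mono[OF p c0] .
  have e3: "L*\<theta>2^2*b \<le> L*\<theta>2/2*b"
  proof -
    have "0 \<le> L*\<theta>2*(1/2 - \<theta>2)*b" using L t2 b by simp
    then show ?thesis by (simp add: algebra_simps power2_eq_square)
  qed
  have mupos: "0 < \<mu>"
  proof (rule ccontr)
    assume "\<not> 0 < \<mu>"
    then have "\<mu>*(1-\<theta>1-\<theta>1'-\<epsilon>) \<le> 0" using den by (simp add: mult_nonpos_nonneg)
    moreover have "0 < (1-\<theta>2)*L" using t2 L by simp
    ultimately show False using b2 by linarith
  qed
  have muL: "L \<le> \<mu>"
  proof -
    have "L \<le> \<mu>*(1-\<theta>1'-\<epsilon>)" using b1 b2 by (simp add: algebra_simps)
    also have "\<dots> \<le> \<mu>" using mupos t1 eps by (simp add: algebra_simps)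
    finally show ?thesis .
  qed
  have e4: "\<mu>'*\<theta>1'*a \<le> \<mu>*\<theta>1'*a" using mm t1 a by (simp add: mult_right_mono)
  have e5: "\<epsilon>*L*a \<le> \<epsilon>*\<mu>*a" using muL eps a by (simp add: mult_right_mono mult_left_mono)
  have e6: "(1-\<theta>2)*L*a \<le> \<mu>*(1-\<theta>1-\<theta>1'-\<epsilon>)*a" using b2 a by (simp add: mult_right_mono)
  show ?thesis using e1 e2 e3 e4 e5 e6 by (simp add: algebra_simps)
qed


lemma tsigma_nonneg: "0 \<le> tsigma X k i"
  unfolding tsigma_def by (rule svals_nonneg)



theorem lemmaA3:
  fixes \<rho> \<rho>' :: "real \<Rightarrow> real" and Lg :: real
    and f :: "('a::{finite,linorder}, 'b::{finite,linorder}, 'c::{finite,linorder}) tensor \<Rightarrow> real"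
    and gf :: "('a, 'b, 'c) tensor \<Rightarrow> ('a, 'b, 'c) tensor" and Lf :: real
    and lam \<epsilon> :: real and \<theta>1 \<theta>2 \<mu> :: "nat \<Rightarrow> real"
    and X :: "nat \<Rightarrow> ('a, 'b, 'c) tensor"
  assumes A1_nonneg: "\<And>t. 0 \<le> t \<Longrightarrow> 0 \<le> \<rho> t"
    and A1_deriv: "\<And>t. 0 \<le> t \<Longrightarrow> (\<rho> has_real_derivative \<rho>' t) (at t within {0..})"
    and A1_concave: "concave_on {0..} \<rho>"
    and A1_lip: "\<And>s t. 0 \<le> s \<Longrightarrow> 0 \<le> t \<Longrightarrow> \<bar>\<rho>' s - \<rho>' t\<bar> \<le> Lg * \<bar>s - t\<bar>"
    and A1_pos: "\<And>t. 0 \<le> t \<Longrightarrow> 0 < \<rho>' t"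
    and A2_nonneg: "\<And>W. 0 \<le> f W"
    and A2_grad: "\<And>W. (f has_derivative (\<lambda>H. gf W \<bullet> H)) (at W)"
    and A2_lip: "\<And>V W. norm (gf V - gf W) \<le> Lf * norm (V - W)"
    and A2_Lf: "0 < Lf"
    and lam: "0 < lam"
    and A3_coercive: "filterlim (objF \<rho> lam f) at_top at_infinity"
    and A3_bdd: "\<exists>c. \<forall>W. c \<le> objF \<rho> lam f W"
    and iter: "\<And>t W.
      (let \<alpha> = (\<lambda>k. \<rho>' (\<Sum>i<min (card (UNIV::'a set)) (card (UNIV::'b set)). \<rho> (\<rho> (tsigma (X t) k i))));
           \<beta> = (\<lambda>k i. \<rho>' (\<rho> (tsigma (X t) k i)));
           Y = X t + \<theta>1 t *\<^sub>R (X t - X (t - 1));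
           Z = X t + \<theta>2 t *\<^sub>R (X t - X (t - 1));
           \<Phi> = (\<lambda>V. lam * wfun \<rho> \<alpha> \<beta> V + gf Z \<bullet> (V - Y) + \<mu> t / 2 * (norm (V - Y))\<^sup>2)
       in \<Phi> (X (Suc t)) \<le> \<Phi> W)"
    and A4_eps: "0 < \<epsilon>" "\<epsilon> < 1"
    and A4_theta1: "\<And>t. 0 \<le> \<theta>1 t \<and> \<theta>1 t < (1 - \<epsilon>) / 2"
    and A4_theta2: "\<And>t. 0 \<le> \<theta>2 t \<and> \<theta>2 t \<le> 1 / 2"
    and A4_mu_mono: "\<And>t. \<mu> (Suc t) \<le> \<mu> t"
    and A4_mu_bound0: "\<And>t. \<mu> t \<le> \<mu> 0"
    and A4_mu_bound1: "\<And>t. \<theta>2 t * Lf \<le> \<mu> t * \<theta>1 t"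
    and A4_mu_bound2: "\<And>t. (1 - \<theta>2 t) * Lf / (1 - \<theta>1 t - \<theta>1 (Suc t) - \<epsilon>) \<le> \<mu> t"
  defines "H \<equiv> (\<lambda>t. objF \<rho> lam f (X t) + (\<mu> t * \<theta>1 t / 2) * (norm (X t - X (t - 1)))\<^sup>2)"
  shows "(\<forall>t. H (Suc t) - H t \<le> - (\<epsilon> * Lf / 2) * (norm (X (Suc t) - X t))\<^sup>2)
         \<and> (\<forall>t. H (Suc t) \<le> H t)
         \<and> ((\<lambda>t. X t - X (Suc t)) \<longlonglongrightarrow> 0)"

proof -
  let ?r = "min (card (UNIV::'a set)) (card (UNIV::'b set))"
  define S where "S V k = (\<Sum>i<?r. \<rho> (\<rho> (tsigma V k i)))" for V :: "('a,'b,'c) tensor" and k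
  have rs: "0 \<le> \<rho> (tsigma V k i)" for V k i using A1_nonneg tsigma_nonneg by blast
  have rrs: "0 \<le> \<rho> (\<rho> (tsigma V k i))" for V k i using A1_nonneg rs by blast
  have S0: "0 \<le> S V k" for V k unfolding S_def by (intro sum_nonneg rrs)
  have tang: "\<And>x y. 0 \<le> x \<Longrightarrow> 0 \<le> y \<Longrightarrow> \<rho> y \<le> \<rho> x + \<rho>' x * (y - x)"
    using concave_tangent[OF A1_concave A1_deriv] by blast
  have desc: "\<bar>f y - f x - gf x \<bullet> (y - x)\<bar> \<le> Lf / 2 * (norm (y - x))\<^sup>2" for x y
    by (rule descent_aux[OF A2_grad A2_lip])
  have th1: "\<And>t. 0 \<le> \<theta>1 t" "\<And>t. \<theta>1 t < (1 - \<epsilon>) / 2" using A4_theta1 by auto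
  have th2: "\<And>t. 0 \<le> \<theta>2 t" "\<And>t. \<theta>2 t \<le> 1 / 2" using A4_theta2 by auto
  obtain c where c: "\<And>W. c \<le> objF \<rho> lam f W" using A3_bdd by blast
  have mupos: "0 < \<mu> t" for t
  proof -
    have den: "0 < 1 - \<theta>1 t - \<theta>1 (Suc t) - \<epsilon>" using th1(2)[of t] th1(2)[of "Suc t"] by (simp add: field_simps)
    have "0 < (1 - \<theta>2 t) * Lf / (1 - \<theta>1 t - \<theta>1 (Suc t) - \<epsilon>)"
      using den th2(2)[of t] A2_Lf by simp
    then show ?thesis using A4_mu_bound2[of t] by linarith
  qed
  have step: "H (Suc t) - H t \<le> - (\<epsilon> * Lf / 2) * (norm (X (Suc t) - X t))\<^sup>2" for t
  proof -
    define \<alpha> where "\<alpha> = (\<lambda>k. \<rho>' (\<Sum>i<?r. \<rho> (\<rho> (tsigma (X t) k i))))"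
    define \<beta> where "\<beta> = (\<lambda>k i. \<rho>' (\<rho> (tsigma (X t) k i)))"
    define D where "D = X (Suc t) - X t"
    define E where "E = X t - X (t - 1)"
    define Y where "Y = X t + \<theta>1 t *\<^sub>R E"
    define Z where "Z = X t + \<theta>2 t *\<^sub>R E"
    define g where "g = gf Z"
    have opt: "lam * wfun \<rho> \<alpha> \<beta> (X (Suc t)) + g \<bullet> (X (Suc t) - Y) + \<mu> t / 2 * (norm (X (Suc t) - Y))\<^sup>2
       \<le> lam * wfun \<rho> \<alpha> \<beta> (X t) + g \<bullet> (X t - Y) + \<mu> t / 2 * (norm (X t - Y))\<^sup>2"
      using iter[of t "X t"] unfolding Let_def \<alpha>_def \<beta>_def g_def Y_def Z_def E_def by simp
    have maj: "objF \<rho> lam f (X (Suc t)) - objF \<rho> lam f (X t)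
        \<le> lam * (wfun \<rho> \<alpha> \<beta> (X (Suc t)) - wfun \<rho> \<alpha> \<beta> (X t)) + f (X (Suc t)) - f (X t)"
    proof -
      have k: "\<rho> (S (X (Suc t)) k) - \<rho> (S (X t) k) \<le>
          (\<Sum>i<?r. \<alpha> k * \<beta> k i * \<rho> (tsigma (X (Suc t)) k i)) - (\<Sum>i<?r. \<alpha> k * \<beta> k i * \<rho> (tsigma (X t) k i))" for k
      proof -
        have in1: "S (X (Suc t)) k - S (X t) k \<le> (\<Sum>i<?r. \<beta> k i * (\<rho> (tsigma (X (Suc t)) k i) - \<rho> (tsigma (X t) k i)))"
        proof -
          have "S (X (Suc t)) k - S (X t) k = (\<Sum>i<?r. \<rho> (\<rho> (tsigma (X (Suc t)) k i)) - \<rho> (\<rho> (tsigma (X t) k i)))"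
            unfolding S_def by (simp add: sum_subtractf)
          also have "\<dots> \<le> (\<Sum>i<?r. \<beta> k i * (\<rho> (tsigma (X (Suc t)) k i) - \<rho> (tsigma (X t) k i)))"
          proof (rule sum_mono)
            fix i
            show "\<rho> (\<rho> (tsigma (X (Suc t)) k i)) - \<rho> (\<rho> (tsigma (X t) k i))
              \<le> \<beta> k i * (\<rho> (tsigma (X (Suc t)) k i) - \<rho> (tsigma (X t) k i))"
              using tang[OF rs rs, of "X (Suc t)" k i "X t" k i] unfolding \<beta>_def by simp
          qed
          finally show ?thesis .
        qed
        have apos: "0 \<le> \<alpha> k" unfolding \<alpha>_def using A1_pos[OF S0[of "X t" k]] by (simp add: S_def)
        have "\<rho> (S (X (Suc t)) k) - \<rho> (S (X t) k) \<le> \<alpha> k * (S (X (Suc t)) k - S (X t) k)"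
          using tang[OF S0 S0, of "X (Suc t)" k "X t" k] by (simp add: \<alpha>_def S_def)
        also have "\<dots> \<le> \<alpha> k * (\<Sum>i<?r. \<beta> k i * (\<rho> (tsigma (X (Suc t)) k i) - \<rho> (tsigma (X t) k i)))"
          using mult_left_mono[OF in1 apos] .
        also have "\<dots> = (\<Sum>i<?r. \<alpha> k * \<beta> k i * \<rho> (tsigma (X (Suc t)) k i)) - (\<Sum>i<?r. \<alpha> k * \<beta> k i * \<rho> (tsigma (X t) k i))"
          by (simp add: sum_distrib_left sum_subtractf algebra_simps)
        finally show ?thesis .
      qed
      have "(\<Sum>k\<in>UNIV. \<rho> (S (X (Suc t)) k)) - (\<Sum>k\<in>UNIV. \<rho> (S (X t) k))
          \<le> wfun \<rho> \<alpha> \<beta> (X (Suc t)) - wfun \<rho> \<alpha> \<beta> (X t)"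
        unfolding wfun_def sum_subtractf[symmetric] by (rule sum_mono) (use k in \<open>simp add: sum_subtractf\<close>)
      then have "lam * ((\<Sum>k\<in>UNIV. \<rho> (S (X (Suc t)) k)) - (\<Sum>k\<in>UNIV. \<rho> (S (X t) k)))
          \<le> lam * (wfun \<rho> \<alpha> \<beta> (X (Suc t)) - wfun \<rho> \<alpha> \<beta> (X t))"
        using lam by (simp add: mult_left_mono)
      then show ?thesis unfolding objF_def S_def by (simp add: algebra_simps)
    qed
    have nrm: "(norm (D - s *\<^sub>R E))\<^sup>2 = (norm D)\<^sup>2 - 2 * s * (D \<bullet> E) + s^2 * (norm E)\<^sup>2" for s
      unfolding power2_norm_eq_inner by (simp add: inner_diff_left inner_diff_right inner_commute power2_eq_square algebra_simps)
    have e1: "X (Suc t) - Y = D - \<theta>1 t *\<^sub>R E" unfolding D_def Y_def by simp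
    have e2: "X t - Y = - (\<theta>1 t *\<^sub>R E)" unfolding Y_def by simp
    have e3: "X (Suc t) - Z = D - \<theta>2 t *\<^sub>R E" unfolding D_def Z_def by simp
    have e4: "X t - Z = - (\<theta>2 t *\<^sub>R E)" unfolding Z_def by simp
    have opt': "lam * wfun \<rho> \<alpha> \<beta> (X (Suc t)) + (g \<bullet> D - \<theta>1 t * (g \<bullet> E)) + \<mu> t / 2 * ((norm D)\<^sup>2 - 2 * \<theta>1 t * (D \<bullet> E) + (\<theta>1 t)^2 * (norm E)\<^sup>2)
       \<le> lam * wfun \<rho> \<alpha> \<beta> (X t) + (- \<theta>1 t * (g \<bullet> E)) + \<mu> t / 2 * ((\<theta>1 t)^2 * (norm E)\<^sup>2)"
      using opt unfolding e1 e2 nrm by (simp add: inner_diff_right power_mult_distrib)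
    have d1: "f (X (Suc t)) - f Z - (g \<bullet> D - \<theta>2 t * (g \<bullet> E)) \<le> Lf / 2 * ((norm D)\<^sup>2 - 2 * \<theta>2 t * (D \<bullet> E) + (\<theta>2 t)^2 * (norm E)\<^sup>2)"
      using desc[of "X (Suc t)" Z] unfolding e3 nrm g_def[symmetric] abs_le_iff by (simp add: inner_diff_right)
    have d2: "- (Lf / 2 * ((\<theta>2 t)^2 * (norm E)\<^sup>2)) \<le> f (X t) - f Z - (- \<theta>2 t * (g \<bullet> E))"
      using desc[of "X t" Z] unfolding e4 g_def[symmetric] abs_le_iff by (simp add: power_mult_distrib)
    have p: "2 * (D \<bullet> E) \<le> (norm D)\<^sup>2 + (norm E)\<^sup>2"
    proof -
      have "0 \<le> (norm (D - E))\<^sup>2" by simp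
      then show ?thesis by (simp add: power2_norm_eq_inner inner_diff_left inner_diff_right inner_commute)
    qed
    have den: "0 < 1 - \<theta>1 t - \<theta>1 (Suc t) - \<epsilon>" using th1(2)[of t] th1(2)[of "Suc t"] by (simp add: field_simps)
    have b2: "(1 - \<theta>2 t) * Lf \<le> \<mu> t * (1 - \<theta>1 t - \<theta>1 (Suc t) - \<epsilon>)"
      using A4_mu_bound2[of t] den by (simp add: pos_divide_le_eq)
    have core: "objF \<rho> lam f (X (Suc t)) + \<mu> (Suc t) * \<theta>1 (Suc t) / 2 * (norm D)\<^sup>2
        - (objF \<rho> lam f (X t) + \<mu> t * \<theta>1 t / 2 * (norm E)\<^sup>2) \<le> - (\<epsilon> * Lf / 2) * (norm D)\<^sup>2"
      by (rule arith_core[OF opt' d1 d2 maj p]) (use A2_Lf th2[of t] th1(1)[of t] th1(1)[of "Suc t"] den A4_mu_mono[of t] A4_mu_bound1[of t] b2 A4_eps in auto)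
    show ?thesis using core unfolding H_def D_def E_def by simp
  qed
  have mono: "H (Suc t) \<le> H t" for t
  proof -
    have "0 \<le> (\<epsilon> * Lf / 2) * (norm (X (Suc t) - X t))\<^sup>2" using A4_eps A2_Lf by simp
    then show ?thesis using step[of t] by linarith
  qed
  have Hlow: "c \<le> H t" for t
  proof -
    have "0 \<le> \<mu> t * \<theta>1 t / 2 * (norm (X t - X (t - 1)))\<^sup>2" using mupos[of t] th1(1)[of t] by simp
    then show ?thesis unfolding H_def using c[of "X t"] by linarith
  qed
  define d where "d t = (norm (X (Suc t) - X t))\<^sup>2" for t
  have tele: "H (Suc n) + (\<epsilon> * Lf / 2) * (\<Sum>k\<le>n. d k) \<le> H 0" for n
  proof (induction n)
    case 0 then show ?case using step[of 0] by (simp add: d_def)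
  next
    case (Suc n) then show ?case using step[of "Suc n"] by (simp add: d_def algebra_simps)
  qed
  have cpos: "0 < \<epsilon> * Lf / 2" using A4_eps A2_Lf by simp
  have bnd: "(\<Sum>k\<le>n. d k) \<le> (H 0 - c) / (\<epsilon> * Lf / 2)" for n
  proof -
    have "(\<epsilon> * Lf / 2) * (\<Sum>k\<le>n. d k) \<le> H 0 - c" using tele[of n] Hlow[of "Suc n"] by linarith
    then show ?thesis using cpos by (simp add: pos_le_divide_eq mult.commute)
  qed
  have "summable d" by (rule bounded_imp_summable[OF _ bnd]) (simp add: d_def)
  then have "d \<longlonglongrightarrow> 0" by (rule summable_LIMSEQ_zero)
  then have "(\<lambda>t. sqrt (d t)) \<longlonglongrightarrow> 0" using tendsto_real_sqrt by fastforce
  then have "(\<lambda>t. norm (X t - X (Suc t))) \<longlonglongrightarrow> 0" by (simp add: d_def norm_minus_commute)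
  then have lim: "(\<lambda>t. X t - X (Suc t)) \<longlonglongrightarrow> 0" by (simp add: tendsto_norm_zero_iff)
  show ?thesis using step mono lim by blast
qed


end
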